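(* Let $a$ and $c$ be coprime positive integers with $a$ odd. Then for every integer $p\ge0$ and all $x,z\in\mathbb{R}$: if $c$ is even, $$\sum_{\mu=0}^{a-1}\mathcal{E}_{p}\Big(c\frac{\mu+x}{a}+z\Big)=a^{-p}\mathcal{E}_{p}(az+cx),$$ and if $c$ is odd, $$\sum_{\mu=0}^{a-1}(-1)^{\mu}\mathcal{E}_{p}\Big(c\frac{\mu+x}{a}+z\Big)=a^{-p}\mathcal{E}_{p}(az+cx).$$
   Context: $E_n(x)$ is the $n$th Euler polynomial, defined by $\frac{2e^{xt}}{e^t+1}=\sum_{n\ge0}E_n(x)\frac{t^n}{n!}$, and the $n$th Euler function $\mathcal{E}_n$ ($n\ge0$) is defined by $\mathcal{E}_n(x)=E_n(x)$ for $0\le x<1$ and $\mathcal{E}_n(x+m)=(-1)^m\mathcal{E}_n(x)$ for $m\in\mathbb{Z}$. *)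

theory Defs
  imports "HOL-Computational_Algebra.Formal_Power_Series" Complex_Main
begin

definition euler_poly :: "nat \<Rightarrow> real \<Rightarrow> real" where
  "euler_poly n x =
     fact n * fps_nth (fps_const 2 * fps_exp x / (fps_exp 1 + 1)) n"

definition euler_fun :: "nat \<Rightarrow> real \<Rightarrow> real" where
  "euler_fun n x = (-1) powi \<lfloor>x\<rfloor> * euler_poly n (frac x)"

end

theory Submission
  imports Defs
begin
unbundle fps_syntax
lemma geom_alt: "(\<Sum>r<n. (- x) ^ r) * (1 + x) = 1 - (- x) ^ n" for x :: "'a::comm_ring_1"
  by (induction n) (simp_all add: algebra_simps)

lemma euler_poly_mult:
  fixes a :: nat and y :: real
  assumes "a > 0" "odd a"
  shows "(\<Sum>r<a. (-1) ^ r * euler_poly p (y + real r / real a))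
         = (1 / real a) ^ p * euler_poly p (real a * y)"
proof -
  define d where "d = 1 / real a"
  define q :: "real fps" where "q = fps_exp d"
  define D :: "real fps" where "D = fps_exp 1 + 1"
  define G where "G = (\<lambda>y::real. fps_const 2 * fps_exp y / D)"
  have D0: "D $ 0 \<noteq> 0" by (simp add: D_def)
  have q0: "(1 + q) $ 0 \<noteq> 0" by (simp add: q_def)
  have G: "G y = fps_const 2 * fps_exp y * inverse D" for y
    unfolding G_def using D0 by (simp add: fps_divide_unit)
  have ep: "euler_poly n y = fact n * G y $ n" for n y
    by (simp add: euler_poly_def G_def D_def)
  have qa: "q ^ a = fps_exp 1"
    using assms by (simp add: q_def d_def fps_exp_power_mult)
  have e: "fps_exp (y + real r / real a) = fps_exp y * q ^ r" for r
    by (simp add: q_def d_def fps_exp_power_mult fps_exp_add_mult)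
  define P where "P = (\<Sum>r<a. (- q) ^ r)"
  have PD: "P * (1 + q) = D"
    unfolding P_def geom_alt D_def using assms qa by simp
  have iP: "inverse D * P = inverse (1 + q)"
  proof -
    have "inverse D * P = inverse D * P * ((1 + q) * inverse (1 + q))"
      using inverse_mult_eq_1'[OF q0] by simp
    also have "\<dots> = inverse D * (P * (1 + q)) * inverse (1 + q)" by (simp only: mult.assoc)
    also have "\<dots> = (inverse D * D) * inverse (1 + q)" by (simp only: PD)
    also have "\<dots> = inverse (1 + q)" using inverse_mult_eq_1[OF D0] by simp
    finally show ?thesis .
  qed
  define L where "L = (\<Sum>r<a. fps_const ((-1) ^ r) * G (y + real r / real a))"
  have "L = fps_const 2 * fps_exp y * (inverse D * P)"
  proof -
    have t: "fps_const ((-1) ^ r) * G (y + real r / real a) = (fps_const 2 * fps_exp y * inverse D) * (- q) ^ r" for r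
    proof -
      have "(- q) ^ r = fps_const ((-1) ^ r) * q ^ r"
      proof -
        have "fps_const ((-1::real) ^ r) = (- 1) ^ r"
          by (metis fps_const_neg fps_const_power fps_const_1_eq_1)
        then show ?thesis using power_minus[of q r] by simp
      qed
      then show ?thesis unfolding G e by (simp only: mult_ac)
    qed
    show ?thesis unfolding L_def P_def t by (simp add: sum_distrib_left mult_ac)
  qed
  also have "\<dots> = fps_const 2 * fps_exp y * inverse (1 + q)" using iP by simp
  finally have L1: "L = fps_const 2 * fps_exp y * inverse (1 + q)" .
  define lin :: "real fps" where "lin = fps_const d * fps_X"
  have lin0: "lin $ 0 = 0" by (simp add: lin_def)
  have "G (real a * y) oo lin = (fps_const 2 * fps_exp (real a * y) oo lin) * (inverse D oo lin)"
    unfolding G by (simp add: fps_compose_mult_distrib[OF lin0])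
  also have "inverse D oo lin = inverse (D oo lin)"
    by (rule fps_inverse_compose[OF lin0 D0])
  also have "D oo lin = 1 + q"
    by (simp add: D_def lin_def q_def fps_compose_add_distrib)
  also have "fps_const 2 * fps_exp (real a * y) oo lin = fps_const 2 * fps_exp y"
    using assms by (simp add: lin_def d_def fps_compose_mult_distrib)
  finally have R: "G (real a * y) oo lin = L" using L1 by simp
  have "(\<Sum>r<a. (-1) ^ r * euler_poly p (y + real r / real a)) = fact p * L $ p"
    unfolding L_def ep by (simp add: fps_sum_nth sum_distrib_left algebra_simps)
  also have "\<dots> = fact p * (G (real a * y) oo lin) $ p" using R by simp
  also have "\<dots> = d ^ p * euler_poly p (real a * y)"
    by (simp add: lin_def ep)
  finally show ?thesis by (simp add: d_def)
qed
lemma sign_lemma: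
  fixes a c :: nat and k Q R :: int
  assumes "odd a" "int c * int \<mu> + k = int a * Q + R" "R \<ge> 0"
  shows "(-1::real) ^ (c * \<mu>) * (-1) powi Q = (-1) powi k * (-1) ^ nat R"
proof -
  have "even (int c * int \<mu> + k + Q + R)"
  proof -
    have eq: "int c * int \<mu> + k + Q + R = (int a + 1) * Q + 2 * R" using assms(2) by (simp add: algebra_simps)
    have "even (int a + 1)" using assms(1) by simp
    then have "even ((int a + 1) * Q + 2 * R)" by simp
    then show ?thesis unfolding eq .
  qed
  then have "even (int (c * \<mu>) + Q) \<longleftrightarrow> even (k + R)" by auto
  then show ?thesis using assms(3)
    by (auto simp: power_int_minus_left minus_one_power_iff even_nat_iff)
qed

lemma main:
  fixes a c :: nat and p :: nat and x z :: real
  assumes "a > 0" "coprime a c" "odd a"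
  shows "(\<Sum>\<mu><a. (-1) ^ (c * \<mu>) * euler_fun p (real c * ((real \<mu> + x) / real a) + z))
         = real a powi (- int p) * euler_fun p (real a * z + real c * x)"
proof -
  define T where "T = real a * z + real c * x"
  define k where "k = \<lfloor>T\<rfloor>"
  define s where "s = frac T"
  have Tks: "T = of_int k + s" by (simp add: k_def s_def frac_def)
  have s01: "0 \<le> s" "s < 1" by (auto simp: s_def frac_lt_1)
  define N where "N = (\<lambda>\<mu>::nat. int c * int \<mu> + k)"
  define R where "R = (\<lambda>\<mu>. N \<mu> mod int a)"
  define Q where "Q = (\<lambda>\<mu>. N \<mu> div int a)"
  have NQR: "N \<mu> = int a * Q \<mu> + R \<mu>" for \<mu>
    by (simp add: Q_def R_def)
  have R0: "0 \<le> R \<mu>" and Ra: "R \<mu> < int a" for \<mu>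
    using assms(1) by (auto simp: R_def)
  have trm: "real c * ((real \<mu> + x) / real a) + z = of_int (Q \<mu>) + (of_int (R \<mu>) + s) / real a" for \<mu>
  proof -
    have "real_of_int (N \<mu>) = real a * of_int (Q \<mu>) + of_int (R \<mu>)"
      using NQR[of \<mu>] by (metis of_int_add of_int_mult of_int_of_nat_eq)
    moreover have "real_of_int (N \<mu>) = real c * real \<mu> + of_int k" by (simp add: N_def)
    ultimately have "real c * real \<mu> + of_int k = real a * of_int (Q \<mu>) + of_int (R \<mu>)" by simp
    then show ?thesis using assms(1) Tks unfolding T_def
      by (simp add: field_simps)
  qed
  have frac_in: "0 \<le> (of_int (R \<mu>) + s) / real a" "(of_int (R \<mu>) + s) / real a < 1" for \<mu>
  proof -
    show "0 \<le> (of_int (R \<mu>) + s) / real a" using R0[of \<mu>] s01 by simp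
    have "of_int (R \<mu>) + 1 \<le> real a" using Ra[of \<mu>] by linarith
    then have "of_int (R \<mu>) + s < real a" using s01 by linarith
    then show "(of_int (R \<mu>) + s) / real a < 1" using assms(1) by simp
  qed
  have ef: "euler_fun p (real c * ((real \<mu> + x) / real a) + z)
            = (-1) powi Q \<mu> * euler_poly p ((of_int (R \<mu>) + s) / real a)" for \<mu>
  proof -
    have fl: "\<lfloor>of_int (Q \<mu>) + (of_int (R \<mu>) + s) / real a\<rfloor> = Q \<mu>"
      using frac_in[of \<mu>] by (simp add: floor_unique)
    have fr: "frac (of_int (Q \<mu>) + (of_int (R \<mu>) + s) / real a) = (of_int (R \<mu>) + s) / real a"
      using frac_in[of \<mu>] by (simp add: frac_def fl)
    show ?thesis unfolding trm euler_fun_def fl fr ..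
  qed
  define g where "g = (\<lambda>\<mu>. nat (R \<mu>))"
  have inj: "inj_on g {..<a}"
  proof (rule inj_onI)
    fix m n assume m: "m \<in> {..<a}" and n: "n \<in> {..<a}" and e: "g m = g n"
    then have "R m = R n" using R0 by (simp add: g_def eq_nat_nat_iff)
    then have "int a dvd N m - N n" unfolding R_def by (simp add: mod_eq_dvd_iff)
    then have "int a dvd int c * (int m - int n)" by (simp add: N_def algebra_simps)
    moreover have "coprime (int a) (int c)" using assms(2) by simp
    ultimately have d: "int a dvd (int m - int n)" by (simp add: coprime_dvd_mult_right_iff)
    have "\<bar>int m - int n\<bar> < int a" using m n by auto
    have "int m - int n = 0"
    proof (rule ccontr)
      assume "int m - int n \<noteq> 0"
      from dvd_imp_le_int[OF this d] show False using \<open>\<bar>int m - int n\<bar> < int a\<close> by simp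
    qed
    then show "m = n" by simp
  qed
  have img: "g ` {..<a} \<subseteq> {..<a}" using Ra R0 by (auto simp: g_def nat_less_iff)
  have bij: "bij_betw g {..<a} {..<a}"
    unfolding bij_betw_def using inj img endo_inj_surj[of "{..<a}" g] by auto
  have "(\<Sum>\<mu><a. (-1) ^ (c * \<mu>) * euler_fun p (real c * ((real \<mu> + x) / real a) + z))
      = (\<Sum>\<mu><a. (-1) powi k * ((-1) ^ g \<mu> * euler_poly p (s / real a + real (g \<mu>) / real a)))"
  proof (rule sum.cong[OF refl])
    fix \<mu> assume "\<mu> \<in> {..<a}"
    have sg: "(-1::real) ^ (c * \<mu>) * (-1) powi Q \<mu> = (-1) powi k * (-1) ^ g \<mu>"
      unfolding g_def using sign_lemma[OF assms(3), of c \<mu> k "Q \<mu>" "R \<mu>"] NQR[of \<mu>] R0[of \<mu>]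
      by (simp add: N_def)
    have arg: "(of_int (R \<mu>) + s) / real a = s / real a + real (g \<mu>) / real a"
      using R0[of \<mu>] by (simp add: g_def add_divide_distrib)
    show "(-1) ^ (c * \<mu>) * euler_fun p (real c * ((real \<mu> + x) / real a) + z)
        = (-1) powi k * ((-1) ^ g \<mu> * euler_poly p (s / real a + real (g \<mu>) / real a))"
      unfolding ef arg using sg by (metis mult.assoc)
  qed
  also have "\<dots> = (-1) powi k * (\<Sum>\<mu><a. (-1) ^ g \<mu> * euler_poly p (s / real a + real (g \<mu>) / real a))"
    by (simp add: sum_distrib_left)
  also have "(\<Sum>\<mu><a. (-1) ^ g \<mu> * euler_poly p (s / real a + real (g \<mu>) / real a))
      = (\<Sum>r<a. (-1) ^ r * euler_poly p (s / real a + real r / real a))"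
    by (rule sum.reindex_bij_betw[OF bij, where g = "\<lambda>r. (-1) ^ r * euler_poly p (s / real a + real r / real a)"])
  also have "\<dots> = (1 / real a) ^ p * euler_poly p (real a * (s / real a))"
    by (rule euler_poly_mult[OF assms(1) assms(3)])
  also have "real a * (s / real a) = s" using assms(1) by simp
  finally have L: "(\<Sum>\<mu><a. (-1) ^ (c * \<mu>) * euler_fun p (real c * ((real \<mu> + x) / real a) + z))
      = (-1) powi k * ((1 / real a) ^ p * euler_poly p s)" .
  have "euler_fun p T = (-1) powi k * euler_poly p s" by (simp add: euler_fun_def k_def s_def)
  moreover have "real a powi (- int p) = (1 / real a) ^ p"
    by (simp add: power_int_minus power_one_over inverse_eq_divide)
  ultimately show ?thesis using L unfolding T_def by simp
qed

theorem lemma1: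
  fixes a c :: nat and p :: nat and x z :: real
  assumes "a > 0" "c > 0" "coprime a c" "odd a"
  shows "(even c \<longrightarrow>
            (\<Sum>\<mu><a. euler_fun p (real c * ((real \<mu> + x) / real a) + z))
              = real a powi (- int p) * euler_fun p (real a * z + real c * x))
       \<and> (odd c \<longrightarrow>
            (\<Sum>\<mu><a. (-1) ^ \<mu> * euler_fun p (real c * ((real \<mu> + x) / real a) + z))
              = real a powi (- int p) * euler_fun p (real a * z + real c * x))"
proof -
  note M = main[OF assms(1) assms(3) assms(4), of p x z]
  have 1: "(-1::real) ^ (c * \<mu>) = (if even c then 1 else (-1) ^ \<mu>)" for \<mu>
    by (simp add: power_mult)
  show ?thesis using M by (auto simp: 1)
qed
end
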